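(* Let $h$ be a ternary cubic form whose Hessian $H(h)$ is defined (not identically zero). If $f$ and $g$ are two cubic forms in the pencil $\langle h, H(h)\rangle$ spanned by $h$ and its Hessian, then $R(f,g,-)=0$, i.e. $R(f,g,c)=0$ for every cubic form $c$.
   Context: Let $R\in\bigwedge^3(\mathrm{Sym}^3\mathbb{C}^3)^*$ be the alternating trilinear form on the space $\mathrm{Sym}^3\mathbb{C}^3$ of ternary cubic forms determined by $R(l^3,m^3,n^3)=(\det(l,m,n))^3$ for linear forms $l,m,n$ in $x,y,z$, where $\det(l,m,n)$ is the determinant of the $3\times3$ matrix of their coefficients. The Hessian of a cubic $h$ is $H(h)=\det(\partial^2h/\partial x_i\partial x_j)$. *)

theory Defs
  imports "HOL-Analysis.Analysis" "HOL-Combinatorics.Permutations"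
begin

text \<open>Ternary cubic forms over the complex numbers, in the variables x = v$1, y = v$2, z = v$3,
  represented by their coefficient functions on exponent triples (a,b,c) (monomial x^a y^b z^c).\<close>

type_synonym cubic = "nat \<times> nat \<times> nat \<Rightarrow> complex"

definition is_cubic :: "cubic \<Rightarrow> bool" where
  "is_cubic f \<longleftrightarrow> (\<forall>a b c. a + b + c \<noteq> 3 \<longrightarrow> f (a, b, c) = 0)"

definition ceval :: "cubic \<Rightarrow> complex^3 \<Rightarrow> complex" where
  "ceval f v = (\<Sum>a\<le>3. \<Sum>b\<le>3 - a. f (a, b, 3 - a - b) * (v$1)^a * (v$2)^b * (v$3)^(3 - a - b))"


definition cnt :: "3 \<Rightarrow> 3 \<Rightarrow> 3 \<Rightarrow> 3 \<Rightarrow> nat" where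
  "cnt t i j k = of_bool (i = t) + of_bool (j = t) + of_bool (k = t)"

text \<open>The symmetric coefficient tensor F of f, so that f(v) = sum_{i,j,k} F i j k v_i v_j v_k.\<close>
definition tens :: "cubic \<Rightarrow> 3 \<Rightarrow> 3 \<Rightarrow> 3 \<Rightarrow> complex" where
  "tens f i j k =
     f (cnt 1 i j k, cnt 2 i j k, cnt 3 i j k)
     * of_nat (fact (cnt 1 i j k) * fact (cnt 2 i j k) * fact (cnt 3 i j k)) / 6"

text \<open>Hessian H(h)(v) = det (d^2 h / dx_i dx_j)(v); note d^2 h/dx_i dx_j = 6 sum_k F i j k x_k.\<close>
definition hess :: "cubic \<Rightarrow> complex^3 \<Rightarrow> complex" where
  "hess h v = det (\<chi> i j. 6 * (\<Sum>k\<in>UNIV. tens h i j k * v$k))"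

text \<open>The alternating trilinear form R on Sym^3 C^3, written out explicitly: it is trilinear
  and R(l^3,m^3,n^3) = det(l,m,n)^3, which determines it since cubes of linear forms span.\<close>
definition R :: "cubic \<Rightarrow> cubic \<Rightarrow> cubic \<Rightarrow> complex" where
  "R f g c = (\<Sum>\<sigma>\<in>{p. p permutes (UNIV::3 set)}. \<Sum>\<tau>\<in>{p. p permutes (UNIV::3 set)}.
      \<Sum>\<rho>\<in>{p. p permutes (UNIV::3 set)}.
        of_int (sign \<sigma> * sign \<tau> * sign \<rho>)
        * tens f (\<sigma> 1) (\<tau> 1) (\<rho> 1) * tens g (\<sigma> 2) (\<tau> 2) (\<rho> 2) * tens c (\<sigma> 3) (\<tau> 3) (\<rho> 3))"

end

theory Submission
  imports Defs
begin
definition RR :: "cubic \<Rightarrow> cubic \<Rightarrow> cubic \<Rightarrow> complex" where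
  "RR f g c = - 9 * (c (0, 0, 3)) * (f (0, 3, 0)) * (g (3, 0, 0)) + 3 * (c (0, 0, 3)) * (f (1, 2, 0)) * (g (2, 1, 0)) - 3 * (c (0, 0, 3)) * (f (2, 1, 0)) * (g (1, 2, 0)) + 9 * (c (0, 0, 3)) * (f (3, 0, 0)) * (g (0, 3, 0)) + 3 * (c (0, 1, 2)) * (f (0, 2, 1)) * (g (3, 0, 0)) - 1 * (c (0, 1, 2)) * (f (1, 1, 1)) * (g (2, 1, 0)) - 1 * (c (0, 1, 2)) * (f (1, 2, 0)) * (g (2, 0, 1)) + 1 * (c (0, 1, 2)) * (f (2, 0, 1)) * (g (1, 2, 0)) + 1 * (c (0, 1, 2)) * (f (2, 1, 0)) * (g (1, 1, 1)) - 3 * (c (0, 1, 2)) * (f (3, 0, 0)) * (g (0, 2, 1)) - 3 * (c (0, 2, 1)) * (f (0, 1, 2)) * (g (3, 0, 0)) + 1 * (c (0, 2, 1)) * (f (1, 0, 2)) * (g (2, 1, 0)) + 1 * (c (0, 2, 1)) * (f (1, 1, 1)) * (g (2, 0, 1)) - 1 * (c (0, 2, 1)) * (f (2, 0, 1)) * (g (1, 1, 1)) - 1 * (c (0, 2, 1)) * (f (2, 1, 0)) * (g (1, 0, 2)) + 3 * (c (0, 2, 1)) * (f (3, 0, 0)) * (g (0, 1, 2)) + 9 * (c (0, 3, 0)) * (f (0, 0, 3)) * (g (3, 0, 0)) - 3 * (c (0, 3, 0)) * (f (1, 0, 2)) * (g (2, 0, 1)) + 3 * (c (0, 3, 0)) *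 (f (2, 0, 1)) * (g (1, 0, 2)) - 9 * (c (0, 3, 0)) * (f (3, 0, 0)) * (g (0, 0, 3)) - 1 * (c (1, 0, 2)) * (f (0, 2, 1)) * (g (2, 1, 0)) + 3 * (c (1, 0, 2)) * (f (0, 3, 0)) * (g (2, 0, 1)) + 1 * (c (1, 0, 2)) * (f (1, 1, 1)) * (g (1, 2, 0)) - 1 * (c (1, 0, 2)) * (f (1, 2, 0)) * (g (1, 1, 1)) - 3 * (c (1, 0, 2)) * (f (2, 0, 1)) * (g (0, 3, 0)) + 1 * (c (1, 0, 2)) * (f (2, 1, 0)) * (g (0, 2, 1)) + 1 * (c (1, 1, 1)) * (f (0, 1, 2)) * (g (2, 1, 0)) - 1 * (c (1, 1, 1)) * (f (0, 2, 1)) * (g (2, 0, 1)) - 1 * (c (1, 1, 1)) * (f (1, 0, 2)) * (g (1, 2, 0)) + 1 * (c (1, 1, 1)) * (f (1, 2, 0)) * (g (1, 0, 2)) + 1 * (c (1, 1, 1)) * (f (2, 0, 1)) * (g (0, 2, 1)) - 1 * (c (1, 1, 1)) * (f (2, 1, 0)) * (g (0, 1, 2)) - 3 * (c (1, 2, 0)) * (f (0, 0, 3)) * (g (2, 1, 0)) + 1 * (c (1, 2, 0)) * (f (0, 1, 2)) * (g (2, 0, 1)) + 1 * (c (1, 2, 0)) * (f (1, 0, 2)) * (g (1, 1, 1)) - 1 * (c (1, 2, 0)) * (f (1, 1, 1)) * (g (1, 0, 2)) - 1 * (c (1, 2, 0)) * (f (2, 0, 1)) * (g (0, 1, 2)) +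 3 * (c (1, 2, 0)) * (f (2, 1, 0)) * (g (0, 0, 3)) - 1 * (c (2, 0, 1)) * (f (0, 1, 2)) * (g (1, 2, 0)) + 1 * (c (2, 0, 1)) * (f (0, 2, 1)) * (g (1, 1, 1)) - 3 * (c (2, 0, 1)) * (f (0, 3, 0)) * (g (1, 0, 2)) + 3 * (c (2, 0, 1)) * (f (1, 0, 2)) * (g (0, 3, 0)) - 1 * (c (2, 0, 1)) * (f (1, 1, 1)) * (g (0, 2, 1)) + 1 * (c (2, 0, 1)) * (f (1, 2, 0)) * (g (0, 1, 2)) + 3 * (c (2, 1, 0)) * (f (0, 0, 3)) * (g (1, 2, 0)) - 1 * (c (2, 1, 0)) * (f (0, 1, 2)) * (g (1, 1, 1)) + 1 * (c (2, 1, 0)) * (f (0, 2, 1)) * (g (1, 0, 2)) - 1 * (c (2, 1, 0)) * (f (1, 0, 2)) * (g (0, 2, 1)) + 1 * (c (2, 1, 0)) * (f (1, 1, 1)) * (g (0, 1, 2)) - 3 * (c (2, 1, 0)) * (f (1, 2, 0)) * (g (0, 0, 3)) - 9 * (c (3, 0, 0)) * (f (0, 0, 3)) * (g (0, 3, 0)) + 3 * (c (3, 0, 0)) * (f (0, 1, 2)) * (g (0, 2, 1)) - 3 * (c (3, 0, 0)) * (f (0, 2, 1)) * (g (0, 1, 2)) + 9 * (c (3, 0, 0)) * (f (0, 3, 0)) * (g (0, 0, 3))"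

definition hc :: "cubic \<Rightarrow> cubic" where
  "hc h = (\<lambda>(a,b,c). if (a,b,c) = (3,0,0) then 24 * (h (1, 0, 2)) * (h (1, 2, 0)) * (h (3, 0, 0)) - 8 * (h (1, 0, 2)) * (h (2, 1, 0)) * (h (2, 1, 0)) - 6 * (h (1, 1, 1)) * (h (1, 1, 1)) * (h (3, 0, 0)) + 8 * (h (1, 1, 1)) * (h (2, 0, 1)) * (h (2, 1, 0)) - 8 * (h (1, 2, 0)) * (h (2, 0, 1)) * (h (2, 0, 1)) else if (a,b,c) = (2,1,0) then 24 * (h (0, 1, 2)) * (h (1, 2, 0)) * (h (3, 0, 0)) - 8 * (h (0, 1, 2)) * (h (2, 1, 0)) * (h (2, 1, 0)) - 24 * (h (0, 2, 1)) * (h (1, 1, 1)) * (h (3, 0, 0)) + 16 * (h (0, 2, 1)) * (h (2, 0, 1)) * (h (2, 1, 0)) + 72 * (h (0, 3, 0)) * (h (1, 0, 2)) * (h (3, 0, 0)) - 24 * (h (0, 3, 0)) * (h (2, 0, 1)) * (h (2, 0, 1)) - 8 * (h (1, 0, 2)) * (h (1, 2, 0)) * (h (2, 1, 0)) + 2 * (h (1, 1, 1)) * (h (1, 1, 1)) * (h (2, 1, 0)) else if (a,b,c) = (2,0,1) then 72 * (h (0, 0, 3)) * (h (1, 2, 0)) * (h (3, 0, 0)) - 24 * (h (0, 0, 3)) * (h (2, 1, 0)) * (h (2, 1, 0)) - 24 * (h (0, 1, 2)) * (h (1, 1, 1)) * (h (3, 0, 0)) + 16 * (h (0, 1, 2))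 * (h (2, 0, 1)) * (h (2, 1, 0)) + 24 * (h (0, 2, 1)) * (h (1, 0, 2)) * (h (3, 0, 0)) - 8 * (h (0, 2, 1)) * (h (2, 0, 1)) * (h (2, 0, 1)) - 8 * (h (1, 0, 2)) * (h (1, 2, 0)) * (h (2, 0, 1)) + 2 * (h (1, 1, 1)) * (h (1, 1, 1)) * (h (2, 0, 1)) else if (a,b,c) = (1,2,0) then 72 * (h (0, 1, 2)) * (h (0, 3, 0)) * (h (3, 0, 0)) - 8 * (h (0, 1, 2)) * (h (1, 2, 0)) * (h (2, 1, 0)) - 24 * (h (0, 2, 1)) * (h (0, 2, 1)) * (h (3, 0, 0)) + 16 * (h (0, 2, 1)) * (h (1, 2, 0)) * (h (2, 0, 1)) + 24 * (h (0, 3, 0)) * (h (1, 0, 2)) * (h (2, 1, 0)) - 24 * (h (0, 3, 0)) * (h (1, 1, 1)) * (h (2, 0, 1)) - 8 * (h (1, 0, 2)) * (h (1, 2, 0)) * (h (1, 2, 0)) + 2 * (h (1, 1, 1)) * (h (1, 1, 1)) * (h (1, 2, 0)) else if (a,b,c) = (1,1,1) then 216 * (h (0, 0, 3)) * (h (0, 3, 0)) * (h (3, 0, 0)) - 24 * (h (0, 0, 3)) * (h (1, 2, 0)) * (h (2, 1, 0)) - 24 * (h (0, 1, 2)) * (h (0, 2, 1)) * (h (3, 0, 0)) - 8 * (h (0, 1, 2)) * (h (1, 1, 1)) * (h (2, 1, 0)) + 24 * (h (0, 1, 2)) * (h (1, 2, 0)) * (h (2, 0, 1)) + 24 * (h (0,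 2, 1)) * (h (1, 0, 2)) * (h (2, 1, 0)) - 8 * (h (0, 2, 1)) * (h (1, 1, 1)) * (h (2, 0, 1)) - 24 * (h (0, 3, 0)) * (h (1, 0, 2)) * (h (2, 0, 1)) - 8 * (h (1, 0, 2)) * (h (1, 1, 1)) * (h (1, 2, 0)) + 2 * (h (1, 1, 1)) * (h (1, 1, 1)) * (h (1, 1, 1)) else if (a,b,c) = (1,0,2) then 72 * (h (0, 0, 3)) * (h (0, 2, 1)) * (h (3, 0, 0)) - 24 * (h (0, 0, 3)) * (h (1, 1, 1)) * (h (2, 1, 0)) + 24 * (h (0, 0, 3)) * (h (1, 2, 0)) * (h (2, 0, 1)) - 24 * (h (0, 1, 2)) * (h (0, 1, 2)) * (h (3, 0, 0)) + 16 * (h (0, 1, 2)) * (h (1, 0, 2)) * (h (2, 1, 0)) - 8 * (h (0, 2, 1)) * (h (1, 0, 2)) * (h (2, 0, 1)) - 8 * (h (1, 0, 2)) * (h (1, 0, 2)) * (h (1, 2, 0)) + 2 * (h (1, 0, 2)) * (h (1, 1, 1)) * (h (1, 1, 1)) else if (a,b,c) = (0,3,0) then 24 * (h (0, 1, 2)) * (h (0, 3, 0)) * (h (2, 1, 0)) - 8 * (h (0, 1, 2)) * (h (1, 2, 0)) * (h (1, 2, 0)) - 8 * (h (0, 2, 1)) * (h (0, 2, 1)) * (h (2, 1, 0)) + 8 * (h (0, 2, 1)) * (h (1, 1, 1)) * (h (1, 2, 0)) - 6 * (h (0, 3, 0)) * (h (1, 1, 1)) * (h (1, 1, 1)) else if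 (a,b,c) = (0,2,1) then 72 * (h (0, 0, 3)) * (h (0, 3, 0)) * (h (2, 1, 0)) - 24 * (h (0, 0, 3)) * (h (1, 2, 0)) * (h (1, 2, 0)) - 8 * (h (0, 1, 2)) * (h (0, 2, 1)) * (h (2, 1, 0)) + 24 * (h (0, 1, 2)) * (h (0, 3, 0)) * (h (2, 0, 1)) - 8 * (h (0, 2, 1)) * (h (0, 2, 1)) * (h (2, 0, 1)) + 16 * (h (0, 2, 1)) * (h (1, 0, 2)) * (h (1, 2, 0)) + 2 * (h (0, 2, 1)) * (h (1, 1, 1)) * (h (1, 1, 1)) - 24 * (h (0, 3, 0)) * (h (1, 0, 2)) * (h (1, 1, 1)) else if (a,b,c) = (0,1,2) then 24 * (h (0, 0, 3)) * (h (0, 2, 1)) * (h (2, 1, 0)) + 72 * (h (0, 0, 3)) * (h (0, 3, 0)) * (h (2, 0, 1)) - 24 * (h (0, 0, 3)) * (h (1, 1, 1)) * (h (1, 2, 0)) - 8 * (h (0, 1, 2)) * (h (0, 1, 2)) * (h (2, 1, 0)) - 8 * (h (0, 1, 2)) * (h (0, 2, 1)) * (h (2, 0, 1)) + 16 * (h (0, 1, 2)) * (h (1, 0, 2)) * (h (1, 2, 0)) + 2 * (h (0, 1, 2)) * (h (1, 1, 1)) * (h (1, 1, 1)) - 24 * (h (0, 3, 0)) * (h (1, 0, 2)) * (h (1, 0, 2)) else if (a,b,c) = (0,0,3) then 24 * (h (0, 0, 3)) * (h (0, 2, 1)) * (h (2, 0, 1)) - 6 * (h (0, 0, 3)) * (h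 (1, 1, 1)) * (h (1, 1, 1)) - 8 * (h (0, 1, 2)) * (h (0, 1, 2)) * (h (2, 0, 1)) + 8 * (h (0, 1, 2)) * (h (1, 0, 2)) * (h (1, 1, 1)) - 8 * (h (0, 2, 1)) * (h (1, 0, 2)) * (h (1, 0, 2)) else 0)"

lemma tens_tab:
  "tens f 1 1 1 = f (3, 0, 0) * (1)"
  "tens f 1 1 2 = f (2, 1, 0) * (1 / 3)"
  "tens f 1 1 3 = f (2, 0, 1) * (1 / 3)"
  "tens f 1 2 1 = f (2, 1, 0) * (1 / 3)"
  "tens f 1 2 2 = f (1, 2, 0) * (1 / 3)"
  "tens f 1 2 3 = f (1, 1, 1) * (1 / 6)"
  "tens f 1 3 1 = f (2, 0, 1) * (1 / 3)"
  "tens f 1 3 2 = f (1, 1, 1) * (1 / 6)"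
  "tens f 1 3 3 = f (1, 0, 2) * (1 / 3)"
  "tens f 2 1 1 = f (2, 1, 0) * (1 / 3)"
  "tens f 2 1 2 = f (1, 2, 0) * (1 / 3)"
  "tens f 2 1 3 = f (1, 1, 1) * (1 / 6)"
  "tens f 2 2 1 = f (1, 2, 0) * (1 / 3)"
  "tens f 2 2 2 = f (0, 3, 0) * (1)"
  "tens f 2 2 3 = f (0, 2, 1) * (1 / 3)"
  "tens f 2 3 1 = f (1, 1, 1) * (1 / 6)"
  "tens f 2 3 2 = f (0, 2, 1) * (1 / 3)"
  "tens f 2 3 3 = f (0, 1, 2) * (1 / 3)"
  "tens f 3 1 1 = f (2, 0, 1) * (1 / 3)"
  "tens f 3 1 2 = f (1, 1, 1) * (1 / 6)"
  "tens f 3 1 3 = f (1, 0, 2) * (1 / 3)"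
  "tens f 3 2 1 = f (1, 1, 1) * (1 / 6)"
  "tens f 3 2 2 = f (0, 2, 1) * (1 / 3)"
  "tens f 3 2 3 = f (0, 1, 2) * (1 / 3)"
  "tens f 3 3 1 = f (1, 0, 2) * (1 / 3)"
  "tens f 3 3 2 = f (0, 1, 2) * (1 / 3)"
  "tens f 3 3 3 = f (0, 0, 3) * (1)"
  by (simp_all add: tens_def cnt_def eval_nat_numeral)

lemma perm3_sum:
  "(\<Sum>p\<in>{p. p permutes (UNIV::3 set)}. F p) =
    F id + F (Transposition.transpose 2 3) + F (Transposition.transpose 1 2) + F (Transposition.transpose 1 2 \<circ> Transposition.transpose 2 3)
    + F (Transposition.transpose 1 3) + F (Transposition.transpose 1 3 \<circ> Transposition.transpose 2 3)"
proof -
  have f123: "finite {2::3, 3}" "1 \<notin> {2::3, 3}" by auto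
  have f23: "finite {3::3}" "2 \<notin> {3::3}" by auto
  show ?thesis
    unfolding UNIV_3
    unfolding sum_over_permutations_insert[OF f123]
    unfolding sum_over_permutations_insert[OF f23]
    unfolding permutes_sing
    by (simp add: ac_simps)
qed

lemma R_RR: "R f g c = RR f g c / 9"
  unfolding R_def perm3_sum
  by (simp add: sign_swap_id permutation_swap_id sign_compose sign_id swap_id_eq Transposition.transpose_def
     tens_tab RR_def algebra_simps)
lemma ceval_expl: "ceval f v = f (3, 0, 0) * v$1^3 * v$2^0 * v$3^0 + f (2, 1, 0) * v$1^2 * v$2^1 * v$3^0 + f (2, 0, 1) * v$1^2 * v$2^0 * v$3^1 + f (1, 2, 0) * v$1^1 * v$2^2 * v$3^0 + f (1, 1, 1) * v$1^1 * v$2^1 * v$3^1 + f (1, 0, 2) * v$1^1 * v$2^0 * v$3^2 + f (0, 3, 0) * v$1^0 * v$2^3 * v$3^0 + f (0, 2, 1) * v$1^0 * v$2^2 * v$3^1 + f (0, 1, 2) * v$1^0 * v$2^1 * v$3^2 + f (0, 0, 3) * v$1^0 * v$2^0 * v$3^3"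
  by (simp add: ceval_def eval_nat_numeral atMost_Suc algebra_simps)

lemma hess_hc: "hess h v = ceval (hc h) v"
  unfolding hess_def det_3 sum_3 ceval_expl
  by (simp add: hc_def tens_tab algebra_simps power2_eq_square power3_eq_cube)

lemma RR_comb: "RR (\<lambda>m. a1*h m + b1*k m) (\<lambda>m. a2*h m + b2*k m) c = (a1*b2 - b1*a2) * RR h k c"
  by (simp add: RR_def algebra_simps)

lemma RR_key: "RR h (hc h) c = 0"
  by (simp add: RR_def hc_def algebra_simps)
lemma trip3: "a + b + c = (3::nat) \<Longrightarrow> (a,b,c) \<in> {(3,0,0),(2,1,0),(2,0,1),(1,2,0),(1,1,1),(1,0,2),(0,3,0),(0,2,1),(0,1,2),(0,0,3)}"
proof -
  assume H: "a + b + c = 3"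
  have c: "c = 3 - a - b" "a + b \<le> 3" using H by arith+
  have "a = 0 \<or> a = 1 \<or> a = 2 \<or> a = 3" "b = 0 \<or> b = 1 \<or> b = 2 \<or> b = 3" using H by arith+
  then show ?thesis unfolding c(1) using c(2) by (elim disjE) simp_all
qed

definition pt :: "complex \<Rightarrow> complex \<Rightarrow> complex \<Rightarrow> complex^3" where
  "pt x y z = (\<chi> i. if i = 1 then x else if i = 2 then y else z)"

lemma pt_simps[simp]: "pt x y z $ 1 = x" "pt x y z $ 2 = y" "pt x y z $ 3 = z"
  by (simp_all add: pt_def)

lemma pm0: "(p::complex) + q = 0 \<Longrightarrow> - p + q = 0 \<Longrightarrow> p = 0 \<and> q = 0"
  by (auto simp: add_eq_0_iff)

lemma ceval_zero:
  assumes c: "is_cubic f" and z: "\<forall>v. ceval f v = 0"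
  shows "f m = 0"
proof -
  have e: "\<And>x y z. ceval f (pt x y z) = 0" using z by blast
  have a1: "f (3,0,0) = 0" using e[of 1 0 0] by (simp add: ceval_expl)
  have a2: "f (0,3,0) = 0" using e[of 0 1 0] by (simp add: ceval_expl)
  have a3: "f (0,0,3) = 0" using e[of 0 0 1] by (simp add: ceval_expl)
  have b1: "f (2,1,0) + f (1,2,0) = 0" using e[of 1 1 0] a1 a2 by (simp add: ceval_expl)
  have b2: "- f (2,1,0) + f (1,2,0) = 0" using e[of 1 "-1" 0] a1 a2 by (simp add: ceval_expl)
  have b3: "f (2,0,1) + f (1,0,2) = 0" using e[of 1 0 1] a1 a3 by (simp add: ceval_expl)
  have b4: "- f (2,0,1) + f (1,0,2) = 0" using e[of 1 0 "-1"] a1 a3 by (simp add: ceval_expl)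
  have b5: "f (0,2,1) + f (0,1,2) = 0" using e[of 0 1 1] a2 a3 by (simp add: ceval_expl)
  have b6: "- f (0,2,1) + f (0,1,2) = 0" using e[of 0 1 "-1"] a2 a3 by (simp add: ceval_expl)
  have d1: "f (2,1,0) = 0" "f (1,2,0) = 0" using pm0[OF b1 b2] by auto
  have d2: "f (2,0,1) = 0" "f (1,0,2) = 0" using pm0[OF b3 b4] by auto
  have d3: "f (0,2,1) = 0" "f (0,1,2) = 0" using pm0[OF b5 b6] by auto
  have d4: "f (1,1,1) = 0" using e[of 1 1 1] a1 a2 a3 d1 d2 d3 by (simp add: ceval_expl)
  show ?thesis
  proof (cases m)
    case (fields a b cc)
    show ?thesis
    proof (cases "a + b + cc = 3")
      case True
      then show ?thesis using trip3[OF True] fields a1 a2 a3 d1 d2 d3 d4 by auto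
    next
      case False
      then show ?thesis using c fields by (simp add: is_cubic_def)
    qed
  qed
qed

lemma hc_cubic: "is_cubic (hc h)"
proof (unfold is_cubic_def, intro allI impI)
  fix a b c :: nat
  assume H: "a + b + c \<noteq> 3"
  have ne:
    "((a,b,c) = (3,0,0)) = False"
    "((a,b,c) = (2,1,0)) = False"
    "((a,b,c) = (2,0,1)) = False"
    "((a,b,c) = (1,2,0)) = False"
    "((a,b,c) = (1,1,1)) = False"
    "((a,b,c) = (1,0,2)) = False"
    "((a,b,c) = (0,3,0)) = False"
    "((a,b,c) = (0,2,1)) = False"
    "((a,b,c) = (0,1,2)) = False"
    "((a,b,c) = (0,0,3)) = False"
    using H by auto
  show "hc h (a, b, c) = 0" unfolding hc_def by (simp only: prod.case ne if_False)
qed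

lemma pencil_eq:
  assumes "is_cubic h" "is_cubic f" "\<forall>v. ceval f v = a * ceval h v + b * hess h v"
  shows "f = (\<lambda>m. a * h m + b * hc h m)"
proof
  fix m
  let ?F = "\<lambda>m. f m - a * h m - b * hc h m"
  have c: "is_cubic ?F" using assms(1,2) hc_cubic[of h] by (simp add: is_cubic_def)
  have z: "\<forall>v. ceval ?F v = 0"
  proof
    fix v
    have "ceval ?F v = ceval f v - a * ceval h v - b * ceval (hc h) v"
      by (simp add: ceval_expl algebra_simps)
    then show "ceval ?F v = 0" using assms(3) hess_hc[of h v] by simp
  qed
  have "?F m = 0" using ceval_zero[OF c z] .
  then show "f m = a * h m + b * hc h m" by (simp add: algebra_simps)
qed

theorem mainTheorem2:
  fixes h f g :: cubic
  assumes "is_cubic h" and "\<exists>v. hess h v \<noteq> 0"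
    and "is_cubic f" and "\<exists>a b. \<forall>v. ceval f v = a * ceval h v + b * hess h v"
    and "is_cubic g" and "\<exists>a b. \<forall>v. ceval g v = a * ceval h v + b * hess h v"
  shows "\<forall>c. is_cubic c \<longrightarrow> R f g c = 0"
proof (intro allI impI)
  fix c :: cubic
  obtain a1 b1 where f: "\<forall>v. ceval f v = a1 * ceval h v + b1 * hess h v" using assms(4) by blast
  obtain a2 b2 where g: "\<forall>v. ceval g v = a2 * ceval h v + b2 * hess h v" using assms(6) by blast
  have "R f g c = RR f g c / 9" by (rule R_RR)
  also have "\<dots> = RR (\<lambda>m. a1 * h m + b1 * hc h m) (\<lambda>m. a2 * h m + b2 * hc h m) c / 9"
    using pencil_eq[OF assms(1,3) f] pencil_eq[OF assms(1,5) g] by simp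
  also have "\<dots> = 0" by (simp add: RR_comb RR_key)
  finally show "R f g c = 0" .
qed

thm_deps mainTheorem2

end
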